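(* Let $\delta>0$ and let $O_2$ be an optimal solution of $I_2$ (assumed to exist). Then the optimal cost of the capacitated facility location instance $I_{cap}$ is at most $(1+2\delta)\,\mathrm{Cost}_{I_2}(O_2)$.
   Context: Let $\mathcal F^t$ be a finite set of points (facilities) in a metric space with metric $c$, $|\mathcal F^t|\ge2$, and let $n_i\ge1$ be an integer for each $i\in\mathcal F^t$ ($n_i$ clients are co-located at $i$); let $\mathcal L\ge1$ be an integer. The instance $I_2$ is the lower-bounded facility location instance with facility set $\mathcal F^t$, all opening costs $0$, the $\sum_in_i$ clients (those at $i$ located at $i$), and lower bound $\mathcal L$: a feasible solution opens a subset of $\mathcal F^t$ and assigns every client to an opened facility so that every opened facility receives at least $\mathcal L$ clients; its cost is the sum of client–facility distances. For $i\in\mathcal F^t$ let $l(i)=\min_{i'\in\mathcal F^t,i'\ne i}c(i,i')$. Call $i$ small if $n_i\le\mathcal L$ and big if $n_i>\mathcal L$. The capacitated facility location instance $I_{cap}$ is defined as follows: for small $i$ there is one facility at location $i$ with capacity $\mathcal L$ and opening cost $\delta n_il(i)$, and a demand of $\mathcal L-n_i$ units at $i$; for big $i$ there are two facilities at location $i$: $i_1$ with capacity $\mathcal L$ and opening cost $\delta\mathcal Ll(i)$, and $i_2$ with capacity $n_i-\mathcal L$ and opening cost $0$, and no demand at $i$. A feasible solution of $I_{cap}$ opens some of these facilities and assigns all demand units to opened facilities without exceeding capacities; its cost is the total opening cost plus the sum over demand units of the distance between the unit's location and its facility's location (co-located points have distance $0$). *)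

theory Defs
  imports Complex_Main
begin

text \<open>Points live in an arbitrary metric space (type class metric_space), metric c = dist.
  Facilities: a finite set F of points; n i clients co-located at i; lower bound L.\<close>

definition lmin :: "'a::metric_space set \<Rightarrow> 'a \<Rightarrow> real" where
  "lmin F i = Min {dist i i' | i'. i' \<in> F \<and> i' \<noteq> i}"

definition I2_clients :: "'a set \<Rightarrow> ('a \<Rightarrow> nat) \<Rightarrow> ('a \<times> nat) set" where
  "I2_clients F n = {(i, k). i \<in> F \<and> k < n i}"

definition I2_feasible ::
  "'a set \<Rightarrow> ('a \<Rightarrow> nat) \<Rightarrow> nat \<Rightarrow> 'a set \<Rightarrow> ('a \<times> nat \<Rightarrow> 'a) \<Rightarrow> bool" where
  "I2_feasible F n L S \<sigma> \<longleftrightarrow>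
     S \<subseteq> F \<and> (\<forall>c \<in> I2_clients F n. \<sigma> c \<in> S) \<and>
     (\<forall>j \<in> S. L \<le> card {c \<in> I2_clients F n. \<sigma> c = j})"

definition I2_cost :: "'a::metric_space set \<Rightarrow> ('a \<Rightarrow> nat) \<Rightarrow> ('a \<times> nat \<Rightarrow> 'a) \<Rightarrow> real" where
  "I2_cost F n \<sigma> = (\<Sum>c \<in> I2_clients F n. dist (fst c) (\<sigma> c))"

definition cap_facilities :: "'a set \<Rightarrow> ('a \<Rightarrow> nat) \<Rightarrow> nat \<Rightarrow> ('a \<times> nat) set" where
  "cap_facilities F n L = {(i, 1) | i. i \<in> F} \<union> {(i, 2) | i. i \<in> F \<and> L < n i}"

definition cap_capacity :: "('a \<Rightarrow> nat) \<Rightarrow> nat \<Rightarrow> 'a \<times> nat \<Rightarrow> nat" where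
  "cap_capacity n L f = (if snd f = 1 then L else n (fst f) - L)"

definition cap_open_cost ::
  "real \<Rightarrow> 'a::metric_space set \<Rightarrow> ('a \<Rightarrow> nat) \<Rightarrow> nat \<Rightarrow> 'a \<times> nat \<Rightarrow> real" where
  "cap_open_cost \<delta> F n L f =
     (if snd f = 1 then
        (if n (fst f) \<le> L then \<delta> * real (n (fst f)) * lmin F (fst f)
         else \<delta> * real L * lmin F (fst f))
      else 0)"

definition cap_demand :: "'a set \<Rightarrow> ('a \<Rightarrow> nat) \<Rightarrow> nat \<Rightarrow> ('a \<times> nat) set" where
  "cap_demand F n L = {(i, k). i \<in> F \<and> n i \<le> L \<and> k < L - n i}"

definition cap_feasible ::
  "'a set \<Rightarrow> ('a \<Rightarrow> nat) \<Rightarrow> nat \<Rightarrow> ('a \<times> nat) set \<Rightarrow> ('a \<times> nat \<Rightarrow> 'a \<times> nat) \<Rightarrow> bool" where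
  "cap_feasible F n L T \<tau> \<longleftrightarrow>
     T \<subseteq> cap_facilities F n L \<and> (\<forall>u \<in> cap_demand F n L. \<tau> u \<in> T) \<and>
     (\<forall>f \<in> T. card {u \<in> cap_demand F n L. \<tau> u = f} \<le> cap_capacity n L f)"

definition cap_cost ::
  "real \<Rightarrow> 'a::metric_space set \<Rightarrow> ('a \<Rightarrow> nat) \<Rightarrow> nat \<Rightarrow> ('a \<times> nat) set
     \<Rightarrow> ('a \<times> nat \<Rightarrow> 'a \<times> nat) \<Rightarrow> real" where
  "cap_cost \<delta> F n L T \<tau> =
     (\<Sum>f \<in> T. cap_open_cost \<delta> F n L f) +
     (\<Sum>u \<in> cap_demand F n L. dist (fst u) (fst (\<tau> u)))"

end

theory Submission
  imports Defs
begin

definition good :: "'a set \<Rightarrow> ('a \<Rightarrow> nat) \<Rightarrow> nat \<Rightarrow> ('a \<times> nat \<Rightarrow> 'a) \<Rightarrow> bool" where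
  "good F n L s \<longleftrightarrow> (\<forall>c\<in>I2_clients F n. s c \<in> F) \<and>
     (\<forall>j \<in> s ` I2_clients F n. L \<le> card {c \<in> I2_clients F n. s c = j})"

definition clean :: "'a set \<Rightarrow> ('a \<Rightarrow> nat) \<Rightarrow> ('a \<times> nat \<Rightarrow> 'a) \<Rightarrow> bool" where
  "clean F n s \<longleftrightarrow> (\<forall>a\<in>I2_clients F n. \<forall>c\<in>I2_clients F n. s a \<noteq> fst a \<longrightarrow> s c = fst a \<longrightarrow> fst c = fst a)"

definition nonhome :: "'a set \<Rightarrow> ('a \<Rightarrow> nat) \<Rightarrow> ('a \<times> nat \<Rightarrow> 'a) \<Rightarrow> nat" where
  "nonhome F n s = card {c \<in> I2_clients F n. s c \<noteq> fst c}"

lemma clients_Sigma: "I2_clients F n = Sigma F (\<lambda>i. {..<n i})"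
  unfolding I2_clients_def by auto

lemma finite_clients: "finite F \<Longrightarrow> finite (I2_clients F n)"
  unfolding clients_Sigma by auto

lemma swap_step:
  fixes s :: "'a::metric_space \<times> nat \<Rightarrow> 'a"
  assumes fin: "finite F" and g: "good F n L s"
    and a: "a \<in> I2_clients F n" and b: "b \<in> I2_clients F n"
    and sa: "s a \<noteq> fst a" and sb: "s b = fst a" and fb: "fst b \<noteq> fst a"
  shows "\<exists>s'. good F n L s' \<and> I2_cost F n s' \<le> I2_cost F n s \<and> nonhome F n s' < nonhome F n s"
proof -
  let ?C = "I2_clients F n"
  define p where "p x = (if x = a then b else if x = b then a else x)" for x
  have ab: "a \<noteq> b" using fb by auto
  have pp: "p (p x) = x" for x unfolding p_def by auto
  have pC: "x \<in> ?C \<Longrightarrow> p x \<in> ?C" for x using a b unfolding p_def by auto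
  have pimg: "p ` ?C = ?C"
  proof
    show "p ` ?C \<subseteq> ?C" using pC by auto
    show "?C \<subseteq> p ` ?C" proof
      fix x assume "x \<in> ?C" then show "x \<in> p ` ?C" using pC[of x] pp[of x] by (metis image_eqI)
    qed
  qed
  have pinj: "inj p" by (metis pp injI)
  define s' where "s' = s \<circ> p"
  have cardeq: "card {c \<in> ?C. s' c = j} = card {c \<in> ?C. s c = j}" for j
  proof -
    have "{c \<in> ?C. s' c = j} = p ` {c \<in> ?C. s c = j}"
    proof
      show "{c \<in> ?C. s' c = j} \<subseteq> p ` {c \<in> ?C. s c = j}"
      proof
        fix x assume "x \<in> {c \<in> ?C. s' c = j}"
        then have "p x \<in> {c \<in> ?C. s c = j}" using pC unfolding s'_def by auto
        then show "x \<in> p ` {c \<in> ?C. s c = j}" using pp[of x] by (metis image_eqI)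
      qed
      show "p ` {c \<in> ?C. s c = j} \<subseteq> {c \<in> ?C. s' c = j}"
        using pC pp unfolding s'_def by auto
    qed
    then show ?thesis using pinj by (simp add: card_image inj_on_subset)
  qed
  have img: "s' ` ?C = s ` ?C" unfolding s'_def by (metis image_comp pimg)
  have good': "good F n L s'"
    unfolding good_def
  proof
    show "\<forall>c\<in>?C. s' c \<in> F" using g pC unfolding good_def s'_def by auto
    show "\<forall>j\<in>s' ` ?C. L \<le> card {c \<in> ?C. s' c = j}"
      using g unfolding good_def img cardeq by blast
  qed
  have fC: "finite ?C" using fin finite_clients by auto
  let ?f = "\<lambda>c. dist (fst c) (s c)"
  let ?f' = "\<lambda>c. dist (fst c) (s' c)"
  have b2: "b \<in> ?C - {a}" using b ab by auto
  have dec: "sum h ?C = h a + (h b + sum h (?C - {a} - {b}))" for h :: "_ \<Rightarrow> real"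
    using sum.remove[OF fC a, of h] sum.remove[of "?C - {a}" b h] fC b2 by auto
  have eqrest: "sum ?f' (?C - {a} - {b}) = sum ?f (?C - {a} - {b})"
    by (rule sum.cong) (auto simp: s'_def p_def)
  have "?f' a + ?f' b \<le> ?f a + ?f b"
  proof -
    have "?f' a = 0" using sb ab by (simp add: s'_def p_def)
    moreover have "?f' b = dist (fst b) (s a)" using ab by (simp add: s'_def p_def)
    moreover have "dist (fst b) (s a) \<le> dist (fst b) (fst a) + dist (fst a) (s a)"
      by (rule dist_triangle)
    ultimately show ?thesis using sb by (simp add: dist_commute)
  qed
  then have cost: "I2_cost F n s' \<le> I2_cost F n s"
    unfolding I2_cost_def using dec[of ?f] dec[of ?f'] eqrest by linarith
  have sub: "{c \<in> ?C. s' c \<noteq> fst c} \<subset> {c \<in> ?C. s c \<noteq> fst c}"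
  proof
    show "{c \<in> ?C. s' c \<noteq> fst c} \<subseteq> {c \<in> ?C. s c \<noteq> fst c}"
      using sb fb ab by (auto simp: s'_def p_def)
    show "{c \<in> ?C. s' c \<noteq> fst c} \<noteq> {c \<in> ?C. s c \<noteq> fst c}"
    proof
      assume "{c \<in> ?C. s' c \<noteq> fst c} = {c \<in> ?C. s c \<noteq> fst c}"
      moreover have "a \<in> {c \<in> ?C. s c \<noteq> fst c}" using a sa by auto
      moreover have "a \<notin> {c \<in> ?C. s' c \<noteq> fst c}" using sb by (simp add: s'_def p_def)
      ultimately show False by simp
    qed
  qed
  have "nonhome F n s' < nonhome F n s"
    unfolding nonhome_def by (rule psubset_card_mono) (use fC sub in auto)
  then show ?thesis using good' cost by blast
qed

lemma clean_exists:
  fixes s :: "'a::metric_space \<times> nat \<Rightarrow> 'a"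
  assumes "finite F" "good F n L s"
  shows "\<exists>s'. good F n L s' \<and> I2_cost F n s' \<le> I2_cost F n s \<and> clean F n s'"
  using assms(2)
proof (induction "nonhome F n s" arbitrary: s rule: less_induct)
  case less
  show ?case
  proof (cases "clean F n s")
    case True then show ?thesis using less.prems by auto
  next
    case False
    then obtain a c where "a \<in> I2_clients F n" "c \<in> I2_clients F n" "s a \<noteq> fst a"
      "s c = fst a" "fst c \<noteq> fst a" unfolding clean_def by blast
    from swap_step[OF assms(1) less.prems this] obtain s1 where
      s1: "good F n L s1" "I2_cost F n s1 \<le> I2_cost F n s" "nonhome F n s1 < nonhome F n s" by blast
    from less.hyps[OF s1(3) s1(1)] obtain s2 where
      "good F n L s2" "I2_cost F n s2 \<le> I2_cost F n s1" "clean F n s2" by blast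
    then show ?thesis using s1(2) by (meson order_trans)
  qed
qed


lemma fiber_Sigma: "i \<in> F \<Longrightarrow> {c \<in> I2_clients F n. fst c = i} = {i} \<times> {..<n i}"
  unfolding I2_clients_def by auto

lemma fiber_card: "i \<in> F \<Longrightarrow> card {c \<in> I2_clients F n. fst c = i} = n i"
  by (simp add: fiber_Sigma card_cartesian_product_singleton)

lemma lmin_props:
  fixes F :: "'a::metric_space set"
  assumes "finite F" "card F \<ge> 2" "i \<in> F"
  shows "lmin F i \<ge> 0" "\<And>j. j \<in> F \<Longrightarrow> j \<noteq> i \<Longrightarrow> lmin F i \<le> dist i j"
proof -
  have eq: "{dist i i' | i'. i' \<in> F \<and> i' \<noteq> i} = (\<lambda>i'. dist i i') ` (F - {i})" by auto
  have fin: "finite ((\<lambda>i'. dist i i') ` (F - {i}))" using assms(1) by auto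
  have "F - {i} \<noteq> {}"
  proof
    assume "F - {i} = {}"
    then have "F \<subseteq> {i}" by auto
    then have "card F \<le> 1" using card_mono[of "{i}" F] by simp
    then show False using assms(2) by simp
  qed
  then have ne: "(\<lambda>i'. dist i i') ` (F - {i}) \<noteq> {}" by auto
  show "lmin F i \<ge> 0" unfolding lmin_def eq using fin ne by (simp add: Min_ge_iff)
  show "\<And>j. j \<in> F \<Longrightarrow> j \<noteq> i \<Longrightarrow> lmin F i \<le> dist i j"
    unfolding lmin_def eq using fin by (intro Min_le) auto
qed


theorem lemma4p1:
  fixes F :: "'a::metric_space set" and n :: "'a \<Rightarrow> nat" and L :: nat and \<delta> :: real
    and S :: "'a set" and \<sigma> :: "'a \<times> nat \<Rightarrow> 'a"
  assumes "finite F" and "card F \<ge> 2"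
    and "\<forall>i \<in> F. n i \<ge> 1" and "L \<ge> 1"
    and "\<delta> > 0"
    and "I2_feasible F n L S \<sigma>"
    and "\<forall>S' \<sigma>'. I2_feasible F n L S' \<sigma>' \<longrightarrow> I2_cost F n \<sigma> \<le> I2_cost F n \<sigma>'"
  shows "\<exists>T \<tau>. cap_feasible F n L T \<tau> \<and>
           cap_cost \<delta> F n L T \<tau> \<le> (1 + 2 * \<delta>) * I2_cost F n \<sigma>"
proof -
  define C where "C = I2_clients F n"
  have fC: "finite C" using assms(1) finite_clients C_def by auto
  have "good F n L \<sigma>" using assms(6) unfolding I2_feasible_def good_def by blast
  then obtain s where sg: "good F n L s" and scost: "I2_cost F n s \<le> I2_cost F n \<sigma>"
    and scl: "clean F n s" using clean_exists[OF assms(1)] by blast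
  have sF: "\<And>c. c \<in> C \<Longrightarrow> s c \<in> F" using sg unfolding good_def C_def by auto
  have sL: "\<And>c. c \<in> C \<Longrightarrow> L \<le> card {c' \<in> C. s c' = s c}" using sg unfolding good_def C_def by auto
  have cl: "\<And>a c. a \<in> C \<Longrightarrow> c \<in> C \<Longrightarrow> s a \<noteq> fst a \<Longrightarrow> s c = fst a \<Longrightarrow> fst c = fst a"
    using scl unfolding clean_def C_def by blast
  have Cfst: "\<And>c. c \<in> C \<Longrightarrow> fst c \<in> F \<and> snd c < n (fst c)" unfolding C_def I2_clients_def by auto
  have fib: "\<And>i. i \<in> F \<Longrightarrow> card {c \<in> C. fst c = i} = n i" unfolding C_def by (rule fiber_card)
  have fibS: "\<And>i. i \<in> F \<Longrightarrow> {c \<in> C. fst c = i} = {i} \<times> {..<n i}" unfolding C_def by (rule fiber_Sigma)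
  define K where "K = {i \<in> F. \<forall>c\<in>C. s c \<noteq> i}"
  define Inc where "Inc i = {c \<in> C. s c = i \<and> fst c \<noteq> i}" for i
  define Lv where "Lv i = {c \<in> C. fst c = i \<and> s c \<noteq> i}" for i
  have stayL: "L \<le> card {c \<in> C. s c = i}" if iF: "i \<in> F" and iK: "i \<notin> K" for i
  proof -
    obtain c where "c \<in> C" "s c = i" using iF iK unfolding K_def by blast
    then show ?thesis using sL by blast
  qed
  have incard: "L - n i \<le> card (Inc i)" if "i \<in> F" "i \<notin> K" for i
  proof -
    have "{c \<in> C. s c = i} \<subseteq> Inc i \<union> {c \<in> C. fst c = i}" unfolding Inc_def by auto
    then have "card {c \<in> C. s c = i} \<le> card (Inc i \<union> {c \<in> C. fst c = i})"
      by (intro card_mono) (use fC in \<open>auto simp: Inc_def\<close>)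
    also have "\<dots> \<le> card (Inc i) + n i" using card_Un_le[of "Inc i" "{c \<in> C. fst c = i}"] fib[OF that(1)] by simp
    finally show ?thesis using stayL[OF that] by linarith
  qed
  have leave: "card (Lv i) \<le> n i - L \<and> L < n i" if "i \<in> F" "i \<notin> K" and LvN: "Lv i \<noteq> {}" for i
  proof -
    obtain b where b: "b \<in> C" "fst b = i" "s b \<noteq> i" using LvN unfolding Lv_def by auto
    have st: "{c \<in> C. s c = i} \<subseteq> {c \<in> C. fst c = i}" using cl[OF b(1)] b by auto
    have "{c \<in> C. s c = i} \<union> Lv i \<subseteq> {c \<in> C. fst c = i}" using st unfolding Lv_def by auto
    moreover have "{c \<in> C. s c = i} \<inter> Lv i = {}" unfolding Lv_def by auto
    ultimately have "card {c \<in> C. s c = i} + card (Lv i) \<le> n i"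
      using fib[OF that(1)] fC card_mono[of "{c \<in> C. fst c = i}" "{c \<in> C. s c = i} \<union> Lv i"]
        card_Un_disjoint[of "{c \<in> C. s c = i}" "Lv i"] unfolding Lv_def by auto
    moreover have "finite (Lv i)" using fC unfolding Lv_def by auto
    then have "card (Lv i) \<ge> 1" using that(3) by (simp add: Suc_le_eq card_gt_0_iff)
    ultimately show ?thesis using stayL[OF that(1,2)] by linarith
  qed
  have "\<forall>i\<in>F - K. \<exists>h. h ` {..<L - n i} \<subseteq> Inc i \<and> inj_on h {..<L - n i}"
  proof
    fix i assume "i \<in> F - K"
    then show "\<exists>h. h ` {..<L - n i} \<subseteq> Inc i \<and> inj_on h {..<L - n i}"
      using card_le_inj[of "{..<L - n i}" "Inc i"] incard[of i] fC unfolding Inc_def by auto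
  qed
  then obtain H where H: "\<forall>i\<in>F - K. H i ` {..<L - n i} \<subseteq> Inc i \<and> inj_on (H i) {..<L - n i}"
    by (rule bchoice[elim_format]) blast
  define g where "g u = H (fst u) (snd u)" for u
  define D where "D = cap_demand F n L"
  define U where "U = {u \<in> D. fst u \<notin> K}"
  have Dprop: "\<And>u. u \<in> D \<Longrightarrow> fst u \<in> F \<and> n (fst u) \<le> L \<and> snd u < L - n (fst u)"
    unfolding D_def cap_demand_def by auto
  have fD: "finite D"
  proof -
    have "D \<subseteq> F \<times> {..<L}" using Dprop by force
    then show ?thesis using assms(1) finite_subset by blast
  qed
  have gU: "g u \<in> C \<and> s (g u) = fst u \<and> fst (g u) \<noteq> fst u" if "u \<in> U" for u
  proof -
    have "fst u \<in> F - K" "snd u < L - n (fst u)" using that Dprop unfolding U_def by auto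
    then have "g u \<in> Inc (fst u)" using H unfolding g_def by blast
    then show ?thesis unfolding Inc_def by auto
  qed
  have ginj: "inj_on g U"
  proof (rule inj_onI)
    fix u v assume uv: "u \<in> U" "v \<in> U" "g u = g v"
    then have f: "fst u = fst v" using gU by metis
    have "fst u \<in> F - K" "snd u < L - n (fst u)" "snd v < L - n (fst u)"
      using uv Dprop[of u] Dprop[of v] f unfolding U_def by auto
    then have "snd u = snd v" using H uv(3) f unfolding g_def by (metis inj_onD lessThan_iff)
    then show "u = v" using f by (simp add: prod_eq_iff)
  qed
  define \<tau> where "\<tau> u = (if fst u \<in> K then (fst u, 1::nat)
      else if fst (g u) \<in> K \<and> snd (g u) < L then (fst (g u), 1) else (fst (g u), 2))" for u
  define T where "T = {(i, 1::nat) | i. i \<in> K} \<union> {(i, 2) | i. i \<in> F \<and> L < n i}"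
  have gC: "\<And>u. u \<in> U \<Longrightarrow> g u \<in> C" using gU by blast
  have UD: "U \<subseteq> D" unfolding U_def by auto
  have fU: "finite U" using fD UD finite_subset by blast
  have tauT: "\<tau> u \<in> T" if uD: "u \<in> D" for u
  proof (cases "fst u \<in> K")
    case True then show ?thesis unfolding \<tau>_def T_def by auto
  next
    case False
    then have uU: "u \<in> U" using uD unfolding U_def by auto
    define b where "b = g u"
    have b: "b \<in> C" "s b = fst u" "fst b \<noteq> fst u" using gU[OF uU] b_def by auto
    have bF: "fst b \<in> F" "snd b < n (fst b)" using Cfst[OF b(1)] by auto
    show ?thesis
    proof (cases "fst b \<in> K \<and> snd b < L")
      case True then show ?thesis using False unfolding \<tau>_def T_def b_def by auto
    next
      case c2: False
      have "L < n (fst b)"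
      proof (cases "fst b \<in> K")
        case True then show ?thesis using c2 bF by auto
      next
        case nK: False
        have "b \<in> Lv (fst b)" using b unfolding Lv_def by auto
        then show ?thesis using leave[OF bF(1) nK] by blast
      qed
      then show ?thesis using False c2 bF unfolding \<tau>_def T_def b_def by auto
    qed
  qed
  have Tsub: "T \<subseteq> cap_facilities F n L" unfolding T_def cap_facilities_def K_def by auto
  have cap1: "card {u \<in> D. \<tau> u = (i, 1)} \<le> L" if iK: "i \<in> K" for i
  proof -
    have iF: "i \<in> F" using iK unfolding K_def by auto
    define X1 where "X1 = {u \<in> D. fst u = i}"
    define Y where "Y = {u \<in> U. fst (g u) = i \<and> snd (g u) < L}"
    have "{u \<in> D. \<tau> u = (i, 1)} \<subseteq> X1 \<union> Y"
      unfolding X1_def Y_def U_def \<tau>_def by (auto split: if_splits)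
    then have "card {u \<in> D. \<tau> u = (i, 1)} \<le> card (X1 \<union> Y)"
      by (intro card_mono) (use fD in \<open>auto simp: X1_def Y_def U_def\<close>)
    also have "\<dots> \<le> card X1 + card Y" by (rule card_Un_le)
    also have "card X1 \<le> L - n i"
    proof -
      have "X1 \<subseteq> {i} \<times> {..<L - n i}" unfolding X1_def using Dprop by force
      then have "card X1 \<le> card ({i} \<times> {..<L - n i})" by (intro card_mono) auto
      then show ?thesis by (simp add: card_cartesian_product_singleton)
    qed
    also have "card Y \<le> min (n i) L"
    proof -
      have YU: "Y \<subseteq> U" unfolding Y_def by auto
      have "card Y = card (g ` Y)" using inj_on_subset[OF ginj YU] by (simp add: card_image)
      also have "g ` Y \<subseteq> {i} \<times> {..<min (n i) L}"
      proof
        fix x assume "x \<in> g ` Y"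
        then obtain u where u: "u \<in> Y" "x = g u" by auto
        then have "x \<in> C" "fst x = i" "snd x < L" using gC YU unfolding Y_def by auto
        then show "x \<in> {i} \<times> {..<min (n i) L}" using Cfst[of x] by (cases x) auto
      qed
      then have "card (g ` Y) \<le> card ({i} \<times> {..<min (n i) L})" by (intro card_mono) auto
      finally show ?thesis by (simp add: card_cartesian_product_singleton)
    qed
    finally show ?thesis by linarith
  qed
  have cap2: "card {u \<in> D. \<tau> u = (i, 2)} \<le> n i - L" if iF: "i \<in> F" and iL: "L < n i" for i
  proof -
    define Y where "Y = {u \<in> U. fst (g u) = i \<and> \<not> (i \<in> K \<and> snd (g u) < L)}"
    have "{u \<in> D. \<tau> u = (i, 2)} \<subseteq> Y"
      unfolding Y_def U_def \<tau>_def by (auto split: if_splits)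
    then have "card {u \<in> D. \<tau> u = (i, 2)} \<le> card Y"
      by (intro card_mono) (use fU in \<open>auto simp: Y_def\<close>)
    also have YU: "Y \<subseteq> U" unfolding Y_def by auto
    have "card Y = card (g ` Y)" using inj_on_subset[OF ginj YU] by (simp add: card_image)
    also have "card (g ` Y) \<le> n i - L"
    proof (cases "i \<in> K")
      case True
      have "g ` Y \<subseteq> {i} \<times> {L..<n i}"
      proof
        fix x assume "x \<in> g ` Y"
        then obtain u where u: "u \<in> Y" "x = g u" by auto
        then have "x \<in> C" "fst x = i" "\<not> snd x < L" using gC YU True unfolding Y_def by auto
        then show "x \<in> {i} \<times> {L..<n i}" using Cfst[of x] by (cases x) auto
      qed
      then have "card (g ` Y) \<le> card ({i} \<times> {L..<n i})" by (intro card_mono) auto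
      then show ?thesis by (simp add: card_cartesian_product_singleton)
    next
      case False
      have sub: "g ` Y \<subseteq> Lv i"
      proof
        fix x assume "x \<in> g ` Y"
        then obtain u where u: "u \<in> Y" "x = g u" by auto
        then have "u \<in> U" "fst (g u) = i" using YU unfolding Y_def by auto
        then show "x \<in> Lv i" using gU[of u] u(2) unfolding Lv_def by auto
      qed
      have fLv: "finite (Lv i)" using fC unfolding Lv_def by auto
      show ?thesis
      proof (cases "Lv i = {}")
        case True then show ?thesis using sub by auto
      next
        case ne: False
        have "card (g ` Y) \<le> card (Lv i)" using sub fLv by (rule card_mono[rotated])
        then show ?thesis using leave[OF iF False ne] by linarith
      qed
    qed
    finally show ?thesis .
  qed
  have feas: "cap_feasible F n L T \<tau>"
    unfolding cap_feasible_def
  proof (intro conjI ballI)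
    show "T \<subseteq> cap_facilities F n L" by (rule Tsub)
    show "\<And>u. u \<in> cap_demand F n L \<Longrightarrow> \<tau> u \<in> T" using tauT D_def by blast
    fix f assume "f \<in> T"
    then consider (a) i where "f = (i, 1)" "i \<in> K" | (b) i where "f = (i, 2)" "i \<in> F" "L < n i"
      unfolding T_def by blast
    then show "card {u \<in> cap_demand F n L. \<tau> u = f} \<le> cap_capacity n L f"
    proof cases
      case a then show ?thesis using cap1 unfolding D_def cap_capacity_def by auto
    next
      case b then show ?thesis using cap2 unfolding D_def cap_capacity_def by auto
    qed
  qed
  define h where "h c = dist (fst c) (s c)" for c
  have hnn: "\<And>c. h c \<ge> 0" unfolding h_def by simp
  have costC: "I2_cost F n s = sum h C" unfolding I2_cost_def h_def C_def by simp
  have fK: "finite K" using assms(1) unfolding K_def by auto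
  have KF: "K \<subseteq> F" unfolding K_def by auto
  have open_i: "cap_open_cost \<delta> F n L (i, 1) \<le> \<delta> * (\<Sum>k<n i. h (i, k))" if iK: "i \<in> K" for i
  proof -
    have iF: "i \<in> F" using iK KF by auto
    have l0: "lmin F i \<ge> 0" using lmin_props(1)[OF assms(1,2) iF] .
    have "(\<Sum>k<n i. lmin F i) \<le> (\<Sum>k<n i. h (i, k))"
    proof (rule sum_mono)
      fix k assume "k \<in> {..<n i}"
      then have "(i, k) \<in> C" using iF unfolding C_def I2_clients_def by auto
      then have "s (i, k) \<in> F" "s (i, k) \<noteq> i" using sF iK unfolding K_def by auto
      then show "lmin F i \<le> h (i, k)" unfolding h_def using lmin_props(2)[OF assms(1,2) iF] by simp
    qed
    then have A: "real (n i) * lmin F i \<le> (\<Sum>k<n i. h (i, k))" by simp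
    have B: "cap_open_cost \<delta> F n L (i, 1) \<le> \<delta> * (real (n i) * lmin F i)"
    proof (cases "n i \<le> L")
      case True then show ?thesis unfolding cap_open_cost_def by simp
    next
      case False
      then have "real L * lmin F i \<le> real (n i) * lmin F i" using l0 by (intro mult_right_mono) auto
      then show ?thesis using False assms(5) unfolding cap_open_cost_def by simp
    qed
    show ?thesis using B A assms(5) by (meson mult_left_mono less_imp_le order_trans)
  qed
  define A where "A = (\<lambda>i. (i, 1::nat)) ` K"
  define B where "B = (\<lambda>i. (i, 2::nat)) ` {i \<in> F. L < n i}"
  have TAB: "T = A \<union> B" unfolding T_def A_def B_def by auto
  have fA: "finite A" "finite B" using fK assms(1) unfolding A_def B_def by auto
  have "sum (cap_open_cost \<delta> F n L) T = sum (cap_open_cost \<delta> F n L) A + sum (cap_open_cost \<delta> F n L) B"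
    unfolding TAB by (rule sum.union_disjoint) (use fA in \<open>auto simp: A_def B_def\<close>)
  also have "sum (cap_open_cost \<delta> F n L) B = 0"
    unfolding B_def by (rule sum.neutral) (auto simp: cap_open_cost_def)
  also have "sum (cap_open_cost \<delta> F n L) A = (\<Sum>i\<in>K. cap_open_cost \<delta> F n L (i, 1))"
    unfolding A_def by (subst sum.reindex) (auto simp: inj_on_def)
  also have "\<dots> \<le> (\<Sum>i\<in>K. \<delta> * (\<Sum>k<n i. h (i, k)))" by (rule sum_mono) (rule open_i)
  also have "\<dots> = \<delta> * (\<Sum>i\<in>K. \<Sum>k<n i. h (i, k))" by (simp add: sum_distrib_left)
  also have "(\<Sum>i\<in>K. \<Sum>k<n i. h (i, k)) = sum h (Sigma K (\<lambda>i. {..<n i}))"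
    by (subst sum.Sigma) (use fK in auto)
  also have "\<dots> \<le> sum h C"
    by (rule sum_mono2) (use fC KF hnn in \<open>auto simp: C_def I2_clients_def\<close>)
  finally have opn: "sum (cap_open_cost \<delta> F n L) T \<le> \<delta> * sum h C"
    using assms(5) by (simp add: mult_left_mono)
  have "(\<Sum>u\<in>D. dist (fst u) (fst (\<tau> u))) = (\<Sum>u\<in>U. dist (fst u) (fst (\<tau> u)))"
    by (rule sum.mono_neutral_right) (use fD UD in \<open>auto simp: U_def \<tau>_def\<close>)
  also have "\<dots> = (\<Sum>u\<in>U. h (g u))"
  proof (rule sum.cong)
    fix u assume uU: "u \<in> U"
    then have "fst u \<notin> K" unfolding U_def by auto
    then have "fst (\<tau> u) = fst (g u)" unfolding \<tau>_def by auto
    then show "dist (fst u) (fst (\<tau> u)) = h (g u)" using gU[OF uU] unfolding h_def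
      by (simp add: dist_commute)
  qed simp
  also have "\<dots> = sum h (g ` U)" by (simp add: sum.reindex[OF ginj])
  also have "\<dots> \<le> sum h C" by (rule sum_mono2) (use fC gC hnn in auto)
  finally have asg: "(\<Sum>u\<in>D. dist (fst u) (fst (\<tau> u))) \<le> sum h C" .
  have "cap_cost \<delta> F n L T \<tau> \<le> (1 + \<delta>) * sum h C"
    using opn asg unfolding cap_cost_def D_def by (simp add: algebra_simps)
  also have "\<dots> \<le> (1 + \<delta>) * I2_cost F n \<sigma>" using scost costC assms(5)
    by (intro mult_left_mono) auto
  also have "\<dots> \<le> (1 + 2 * \<delta>) * I2_cost F n \<sigma>"
  proof -
    have "I2_cost F n \<sigma> \<ge> 0" unfolding I2_cost_def by (simp add: sum_nonneg)
    then show ?thesis using assms(5) by (intro mult_right_mono) auto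
  qed
  finally show ?thesis using feas by blast
qed

end
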